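(* Let $X\sim\mathbb P_X$ on $\mathcal X$, $\mathcal Y$ finite, $r:\mathcal X\to\mathbb R^{\mathcal Y}$ and $g:\mathcal X\to\mathbb R^K$. Suppose that for every $a\in\mathbb R^{\mathcal Y}\setminus\{0\}$ and every $b\in\mathbb R^K$, $\Pr\big(a^\top r(X)+b^\top g(X)=0\big)=0$ (i.e., the push-forward of $\mathbb P_X$ under $x\mapsto(r(x),g(x))\in\mathbb R^{\mathcal Y\times K}$ gives no mass to any strict linear subspace with a nonzero component in the $\mathbb R^{\mathcal Y}$ coordinates). Then for every $w:\mathcal Y\times[K]\to\mathbb R$, the set $\operatorname{argmin}_{y\in\mathcal Y}\big(r(X)_y-\sum_{k\in[K]}g(X)_k w(y,k)\big)$ has exactly one element $\mathbb P_X$-almost surely. *)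

theory Defs
  imports "HOL-Probability.Probability"
begin

definition argmin_set :: "('y \<Rightarrow> real) \<Rightarrow> 'y set" where
  "argmin_set F = {y. \<forall>y'. F y \<le> F y'}"

end

theory Submission
  imports Defs
begin

theorem lemma1:
  fixes M :: "'x measure"
    and r :: "'x \<Rightarrow> 'y::finite \<Rightarrow> real"
    and g :: "'x \<Rightarrow> nat \<Rightarrow> real"
    and K :: nat
  assumes "prob_space M"
    and "\<And>y. (\<lambda>x. r x y) \<in> borel_measurable M"
    and "\<And>k. k \<in> {1..K} \<Longrightarrow> (\<lambda>x. g x k) \<in> borel_measurable M"
    and "\<And>(a :: 'y \<Rightarrow> real) (b :: nat \<Rightarrow> real). a \<noteq> (\<lambda>_. 0) \<Longrightarrow>
           measure M {x \<in> space M. (\<Sum>y\<in>UNIV. a y * r x y) + (\<Sum>k\<in>{1..K}. b k * g x k) = 0} = 0"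
  shows "\<forall>w :: 'y \<Rightarrow> nat \<Rightarrow> real.
           AE x in M. card (argmin_set (\<lambda>y. r x y - (\<Sum>k\<in>{1..K}. g x k * w y k))) = 1"
proof
  fix w :: "'y \<Rightarrow> nat \<Rightarrow> real"
  interpret P: prob_space M by fact
  define A where "A = (\<lambda>(p::'y\<times>'y) (y::'y). (of_bool (y = fst p) - of_bool (y = snd p)) :: real)"
  define B where "B = (\<lambda>(p::'y\<times>'y) (k::nat). w (snd p) k - w (fst p) k)"
  define S where "S = (\<lambda>p. {x \<in> space M. (\<Sum>y\<in>UNIV. A p y * r x y) + (\<Sum>k\<in>{1..K}. B p k * g x k) = 0})"
  define N where "N = (\<Union>p\<in>{p. fst p \<noteq> snd p}. S p)"
  have Snull: "S p \<in> null_sets M" if "fst p \<noteq> snd p" for p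
  proof -
    have "A p \<noteq> (\<lambda>_. 0)"
    proof
      assume "A p = (\<lambda>_. 0)"
      hence "A p (fst p) = 0" by simp
      thus False using that by (simp add: A_def)
    qed
    hence m0: "measure M (S p) = 0" unfolding S_def by (rule assms(4))
    have "S p \<in> sets M" unfolding S_def
      using assms(2,3) by measurable
    with m0 show ?thesis
      by (simp add: null_setsI P.emeasure_eq_measure)
  qed
  have "N \<in> null_sets M" unfolding N_def
    by (rule null_sets_UN') (auto intro: Snull)
  moreover have "card (argmin_set (\<lambda>y. r x y - (\<Sum>k\<in>{1..K}. g x k * w y k))) = 1"
    if x: "x \<in> space M - N" for x
  proof -
    define F where "F = (\<lambda>y. r x y - (\<Sum>k\<in>{1..K}. g x k * w y k))"
    have fin: "finite (argmin_set F)" by simp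
    obtain y0 where "F y0 = Min (range F)"
      by (metis (mono_tags, lifting) Min_in UNIV_not_empty finite finite_imageI image_iff image_is_empty)
    hence "y0 \<in> argmin_set F" unfolding argmin_set_def by auto
    hence ne: "argmin_set F \<noteq> {}" by auto
    show ?thesis
    proof (rule ccontr)
      assume "card (argmin_set (\<lambda>y. r x y - (\<Sum>k\<in>{1..K}. g x k * w y k))) \<noteq> 1"
      hence "card (argmin_set F) \<noteq> 1" unfolding F_def .
      obtain y1 where y1: "y1 \<in> argmin_set F" using ne by blast
      have "argmin_set F \<noteq> {y1}" using \<open>card (argmin_set F) \<noteq> 1\<close> by auto
      then obtain y2 where "y2 \<in> argmin_set F" "y2 \<noteq> y1" using y1 by blast
      hence y12: "y1 \<in> argmin_set F" "y2 \<in> argmin_set F" "y1 \<noteq> y2" using y1 by auto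
      have "F y1 = F y2" using y12 unfolding argmin_set_def by (auto intro: order.antisym)
      have s1: "(\<Sum>y\<in>UNIV. A (y1,y2) y * r x y) = r x y1 - r x y2"
      proof -
        have "(\<Sum>y\<in>UNIV. A (y1,y2) y * r x y) = (\<Sum>y\<in>UNIV. (if y = y1 then r x y else 0) - (if y = y2 then r x y else 0))"
          by (rule sum.cong) (auto simp: A_def)
        also have "\<dots> = r x y1 - r x y2" by (simp add: sum_subtractf)
        finally show ?thesis .
      qed
      have s2: "(\<Sum>k\<in>{1..K}. B (y1,y2) k * g x k) = (\<Sum>k\<in>{1..K}. g x k * w y2 k) - (\<Sum>k\<in>{1..K}. g x k * w y1 k)"
        by (simp add: B_def right_diff_distrib sum_subtractf mult.commute)
      have "x \<in> S (y1,y2)" unfolding S_def using x s1 s2 \<open>F y1 = F y2\<close> by (simp add: F_def)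
      hence "x \<in> N" unfolding N_def using y12 by auto
      with x show False by simp
    qed
  qed
  ultimately show "AE x in M. card (argmin_set (\<lambda>y. r x y - (\<Sum>k\<in>{1..K}. g x k * w y k))) = 1"
    by (intro AE_I'[of N]) auto
qed

end
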